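(* Let $p$ be an odd prime and let $n,s$ be positive integers such that $r=2n/s\geq 3$ is an odd integer; put $q=p^n$ and $d=p^s$. There is $\mu\in\mathbb{F}_{q^2}\setminus\mathbb{F}_q$ such that, writing $\mu^d=u_1+u_2\mu$ with $u_1,u_2\in\mathbb{F}_q$, the element $u_2$ is a $(d-1)$-th power of an element of $\mathbb{F}_{q^2}$.
   Context: $\mathbb{F}_q$ denotes the subfield of $\mathbb{F}_{q^2}$ of order $q$; every element of $\mathbb{F}_{q^2}$ can be written uniquely as $a+b\mu$ with $a,b\in\mathbb{F}_q$ when $\mu\notin\mathbb{F}_q$. *)

theory Defs
  imports "HOL-Computational_Algebra.Primes"
begin

text \<open>In a finite field of order q^2, the subfield F_q of order q is the set of
  fixed points of the Frobenius power x \<mapsto> x^q.\<close>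
definition Fsub :: "nat \<Rightarrow> ('a::field) set" where
  "Fsub q = {x. x ^ q = x}"

end

theory Submission
  imports Defs "HOL-Computational_Algebra.Polynomial"
begin

lemma pow_card_same:
  fixes x :: "'a :: {field,finite}"
  shows   "x ^ card (UNIV :: 'a set) = x"
proof (cases "x = 0")
  case False
  have "x * (\<Prod>y\<in>UNIV-{0}. x * y) = x * x ^ (card (UNIV :: 'a set) - 1) * \<Prod>(UNIV-{0})"
    by (simp add: prod.distrib mult_ac)
  also have "x * x ^ (card (UNIV :: 'a set) - 1) = x ^ Suc (card (UNIV :: 'a set) - 1)"
    by (subst power_Suc) auto
  also have "Suc (card (UNIV :: 'a set) - 1) = card (UNIV :: 'a set)"
    using finite_UNIV_card_ge_0[where ?'a = 'a] by simp
  also have "(\<Prod>y\<in>UNIV-{0}. x * y) = (\<Prod>y\<in>UNIV-{0}. y)"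
    by (rule prod.reindex_bij_witness[of _ "\<lambda>y. y / x" "\<lambda>y. x * y"]) (use False in auto)
  finally show ?thesis
    by simp
qed (use finite_UNIV_card_ge_0[where ?'a = 'a] in auto)

lemma geom_nat: "(D::nat) \<ge> 1 \<Longrightarrow> D ^ r - 1 = (D - 1) * (\<Sum>i<r. D ^ i)"
proof -
  assume "D \<ge> 1"
  have "int (D ^ r - 1) = int D ^ r - 1" using \<open>D \<ge> 1\<close> by (simp add: of_nat_diff)
  also have "\<dots> = (int D - 1) * (\<Sum>i<r. int D ^ i)" by (rule power_diff_1_eq)
  also have "\<dots> = int ((D - 1) * (\<Sum>i<r. D ^ i))" using \<open>D \<ge> 1\<close> by (simp add: of_nat_diff)
  finally show ?thesis by (metis of_nat_eq_iff)
qed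

lemma iter_frob:
  fixes y :: "'a::comm_ring_1"
  assumes "y ^ D = y"
  shows "y ^ (D ^ k) = y"
  by (induction k) (simp_all add: power_mult assms mult.commute[of D])

theorem lemma4:
  fixes p n s :: nat
  assumes "prime p" "odd p" "n > 0" "s > 0"
    and "s dvd 2 * n" "odd ((2 * n) div s)" "(2 * n) div s \<ge> 3"
    and "card (UNIV :: ('a::{field,finite}) set) = (p ^ n) ^ 2"
  shows "\<exists>\<mu>::'a. \<mu> \<notin> Fsub (p ^ n) \<and>
           (\<exists>u1 u2. u1 \<in> Fsub (p ^ n) \<and> u2 \<in> Fsub (p ^ n) \<and>
              \<mu> ^ (p ^ s) = u1 + u2 * \<mu> \<and> (\<exists>w::'a. u2 = w ^ (p ^ s - 1)))"
proof -
  define r where "r = (2 * n) div s"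
  have rs: "2 * n = r * s" using assms(5) unfolding r_def by simp
  have "even s" using rs assms(6) unfolding r_def[symmetric] by (metis even_mult_iff odd_two_times_div_two_nat dvd_triv_left)
  then obtain t where st: "s = 2 * t" by blast
  obtain k where rk: "r = 2 * k + 1" using assms(6) unfolding r_def[symmetric] by (metis oddE)
  have nkt: "n = k * s + t" using rs st rk by (simp add: algebra_simps)
  have tpos: "t > 0" using st assms(4) by simp
  have p1: "p > 1" using assms(1) prime_gt_1_nat by blast
  define D where "D = p ^ s"
  define Q where "Q = p ^ n"
  define N where "N = card (UNIV :: 'a set)"
  have ND: "N = D ^ r" unfolding N_def D_def using assms(8) rs
    by (metis power_mult mult.commute)
  have D1: "D \<ge> 1" unfolding D_def using p1 by simp
  define m where "m = (\<Sum>i<r. D ^ i)"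
  have Nm: "N - 1 = (D - 1) * m" unfolding m_def ND by (rule geom_nat[OF D1])
  have mpos: "m \<ge> 1" 
  proof -
    have "D ^ 0 \<le> m" unfolding m_def by (rule member_le_sum) (use rk in auto)
    thus ?thesis by simp
  qed
  have ptD: "p ^ t < D" unfolding D_def st using p1 tpos by (simp add: power_strict_increasing)
  have pt1: "p ^ t \<ge> 1" using p1 by simp
  have ex: "\<exists>\<mu>::'a. \<mu> ^ D = \<mu> \<and> \<mu> ^ Q \<noteq> \<mu>"
  proof (rule ccontr)
    assume H: "\<not> ?thesis"
    have key: "y ^ (p ^ t) = y" if "y ^ D = y" for y :: 'a
    proof -
      have Qy: "y ^ Q = y" using H that by blast
      have "y ^ (p ^ (k * s)) = y" using iter_frob[of y D k] that unfolding D_def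
        by (simp add: power_mult[symmetric] mult.commute)
      hence "y ^ Q = y ^ (p ^ t)" unfolding Q_def nkt by (simp add: power_add power_mult)
      thus ?thesis using Qy by simp
    qed
    define K where "K = m * (p ^ t - 1)"
    have roots: "x ^ K = 1" if "x \<noteq> 0" for x :: 'a
    proof -
      have xN1: "x ^ (N - 1) = 1"
      proof -
        have "x * x ^ (N - 1) = x * 1"
          using pow_card_same[of x] unfolding N_def
          by (metis finite_UNIV_card_ge_0 finite power_eq_if mult_1_right not_gr0 finite_UNIV)
        thus ?thesis using that by simp
      qed
      define y where "y = x ^ m"
      have "y ^ D = y ^ (D - 1) * y" using D1 by (metis power_minus_mult not_one_le_zero neq0_conv)
      also have "y ^ (D - 1) = 1" unfolding y_def using xN1 Nm
        by (metis power_mult mult.commute)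
      finally have "y ^ D = y" by simp
      hence yy: "y ^ (p ^ t) = y" by (rule key)
      have "y \<noteq> 0" unfolding y_def using that by simp
      have "y ^ (p ^ t - 1) * y = y * 1" using yy pt1
        by (metis power_minus_mult not_one_le_zero neq0_conv mult_1_right)
      hence "y ^ (p ^ t - 1) = 1" using \<open>y \<noteq> 0\<close> by simp
      thus ?thesis unfolding y_def K_def by (simp add: power_mult)
    qed
    define P :: "'a poly" where "P = monom 1 K - 1"
    have P0: "P \<noteq> 0"
    proof
      assume "P = 0"
      hence "poly P 0 = 0" by simp
      moreover have "poly P 0 = (0::'a) ^ K - 1" unfolding P_def by (simp add: poly_monom)
      moreover have "K > 0" unfolding K_def using mpos p1 tpos one_less_power[of p t]
        by simp
      ultimately show False by (simp add: zero_power)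
    qed
    have degP: "degree P \<le> K" unfolding P_def
      by (rule degree_diff_le) (auto intro: degree_monom_le)
    have sub: "UNIV - {0} \<subseteq> {x::'a. poly P x = 0}"
      using roots by (auto simp: P_def poly_monom)
    have "card (UNIV - {0::'a}) \<le> card {x::'a. poly P x = 0}"
      by (rule card_mono[OF _ sub]) (simp add: poly_roots_finite[OF P0])
    also have "\<dots> \<le> K" using card_poly_roots_bound[OF P0] degP by simp
    finally have "N - 1 \<le> K" unfolding N_def by (simp add: card_Diff_singleton)
    moreover have "K < N - 1" unfolding Nm K_def using mpos ptD pt1 by (simp add: mult.commute)
    ultimately show False by simp
  qed
  then obtain \<mu> :: 'a where mu: "\<mu> ^ D = \<mu>" "\<mu> ^ Q \<noteq> \<mu>" by blast
  have Q0: "Q > 0" unfolding Q_def using p1 by simp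
  show ?thesis
  proof (intro exI conjI)
    show "\<mu> \<notin> Fsub (p ^ n)" using mu unfolding Fsub_def Q_def by simp
    show "(0::'a) \<in> Fsub (p ^ n)" using Q0 unfolding Fsub_def Q_def by simp
    show "(1::'a) \<in> Fsub (p ^ n)" unfolding Fsub_def by simp
    show "\<mu> ^ p ^ s = 0 + 1 * \<mu>" using mu unfolding D_def by simp
    show "(1::'a) = 1 ^ (p ^ s - 1)" by simp
  qed
qed

end
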